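(* Let $A$ be a module over a ring and let $A=\bigoplus_{i\in I}A_i$ be a direct decomposition of $A$. Then the endomorphism ring $\mathrm{End}\,A$ is centrally essential if and only if for every $i\in I$: (1) $A_i$ is a fully invariant submodule of $A$, and (2) the ring $\mathrm{End}\,A_i$ is centrally essential.
   Context: All rings are associative with identity. A ring $R$ is centrally essential if for every non-zero $a\in R$ there exist non-zero elements $x,y$ of the center of $R$ with $ax=y$. A submodule is fully invariant if it is mapped into itself by every endomorphism of $A$. *)

theory Defs
  imports "HOL-Algebra.Algebra"
begin

text \<open>Left modules over an arbitrary (not necessarily commutative) ring with identity.
  The library locale module requires a commutative ring, so we use the same axioms over ring R.\<close>

locale left_module = R?: ring R + M?: abelian_group M
  for R :: "('r, 's) ring_scheme" (structure) and M :: "('r, 'e, 'm) module_scheme" (structure) +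
  assumes smult_closed [simp, intro]:
      "\<lbrakk> a \<in> carrier R; x \<in> carrier M \<rbrakk> \<Longrightarrow> a \<odot>\<^bsub>M\<^esub> x \<in> carrier M"
    and smult_l_distr:
      "\<lbrakk> a \<in> carrier R; b \<in> carrier R; x \<in> carrier M \<rbrakk> \<Longrightarrow>
      (a \<oplus> b) \<odot>\<^bsub>M\<^esub> x = a \<odot>\<^bsub>M\<^esub> x \<oplus>\<^bsub>M\<^esub> b \<odot>\<^bsub>M\<^esub> x"
    and smult_r_distr:
      "\<lbrakk> a \<in> carrier R; x \<in> carrier M; y \<in> carrier M \<rbrakk> \<Longrightarrow>
      a \<odot>\<^bsub>M\<^esub> (x \<oplus>\<^bsub>M\<^esub> y) = a \<odot>\<^bsub>M\<^esub> x \<oplus>\<^bsub>M\<^esub> a \<odot>\<^bsub>M\<^esub> y"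
    and smult_assoc1:
      "\<lbrakk> a \<in> carrier R; b \<in> carrier R; x \<in> carrier M \<rbrakk> \<Longrightarrow>
      (a \<otimes> b) \<odot>\<^bsub>M\<^esub> x = a \<odot>\<^bsub>M\<^esub> (b \<odot>\<^bsub>M\<^esub> x)"
    and smult_one [simp]:
      "x \<in> carrier M \<Longrightarrow> \<one> \<odot>\<^bsub>M\<^esub> x = x"

definition submod :: "('a, 'c) ring_scheme \<Rightarrow> ('a, 'b, 'd) module_scheme \<Rightarrow> 'b set \<Rightarrow> bool" where
  "submod R M N \<longleftrightarrow> N \<subseteq> carrier M \<and> \<zero>\<^bsub>M\<^esub> \<in> N
     \<and> (\<forall>x\<in>N. \<forall>y\<in>N. x \<oplus>\<^bsub>M\<^esub> y \<in> N)
     \<and> (\<forall>x\<in>N. \<ominus>\<^bsub>M\<^esub> x \<in> N)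
     \<and> (\<forall>a\<in>carrier R. \<forall>x\<in>N. a \<odot>\<^bsub>M\<^esub> x \<in> N)"

definition mod_end :: "('a, 'c) ring_scheme \<Rightarrow> ('a, 'b, 'd) module_scheme \<Rightarrow> ('b \<Rightarrow> 'b) set" where
  "mod_end R M = {f. f \<in> carrier M \<rightarrow>\<^sub>E carrier M
     \<and> (\<forall>x\<in>carrier M. \<forall>y\<in>carrier M. f (x \<oplus>\<^bsub>M\<^esub> y) = f x \<oplus>\<^bsub>M\<^esub> f y)
     \<and> (\<forall>a\<in>carrier R. \<forall>x\<in>carrier M. f (a \<odot>\<^bsub>M\<^esub> x) = a \<odot>\<^bsub>M\<^esub> f x)}"

definition End_ring :: "('a, 'c) ring_scheme \<Rightarrow> ('a, 'b, 'd) module_scheme \<Rightarrow> ('b \<Rightarrow> 'b) ring" where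
  "End_ring R M = \<lparr> carrier = mod_end R M,
      monoid.mult = (\<lambda>f g. compose (carrier M) f g),
      monoid.one = (\<lambda>x\<in>carrier M. x),
      ring.zero = (\<lambda>x\<in>carrier M. \<zero>\<^bsub>M\<^esub>),
      ring.add = (\<lambda>f g. \<lambda>x\<in>carrier M. f x \<oplus>\<^bsub>M\<^esub> g x) \<rparr>"

definition ring_center :: "('a, 'c) ring_scheme \<Rightarrow> 'a set" where
  "ring_center S = {z \<in> carrier S. \<forall>b\<in>carrier S. z \<otimes>\<^bsub>S\<^esub> b = b \<otimes>\<^bsub>S\<^esub> z}"

definition centrally_essential :: "('a, 'c) ring_scheme \<Rightarrow> bool" where
  "centrally_essential S \<longleftrightarrow> (\<forall>a\<in>carrier S. a \<noteq> \<zero>\<^bsub>S\<^esub> \<longrightarrow>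
     (\<exists>x\<in>ring_center S. \<exists>y\<in>ring_center S. x \<noteq> \<zero>\<^bsub>S\<^esub> \<and> y \<noteq> \<zero>\<^bsub>S\<^esub> \<and> a \<otimes>\<^bsub>S\<^esub> x = y))"

definition fully_invariant :: "('a, 'c) ring_scheme \<Rightarrow> ('a, 'b, 'd) module_scheme \<Rightarrow> 'b set \<Rightarrow> bool" where
  "fully_invariant R M N \<longleftrightarrow> submod R M N \<and> (\<forall>f\<in>mod_end R M. f ` N \<subseteq> N)"

definition direct_decomposition ::
  "('a, 'c) ring_scheme \<Rightarrow> ('a, 'b, 'd) module_scheme \<Rightarrow> 'i set \<Rightarrow> ('i \<Rightarrow> 'b set) \<Rightarrow> bool" where
  "direct_decomposition R M I A \<longleftrightarrow> (\<forall>i\<in>I. submod R M (A i))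
     \<and> (\<forall>x\<in>carrier M. \<exists>!c. c \<in> extensional I \<and> (\<forall>i\<in>I. c i \<in> A i)
          \<and> finite {i\<in>I. c i \<noteq> \<zero>\<^bsub>M\<^esub>}
          \<and> x = finsum M c {i\<in>I. c i \<noteq> \<zero>\<^bsub>M\<^esub>})"

end

theory Submission
  imports Defs
begin


context left_module begin

lemma me_closed: "f \<in> mod_end R M \<Longrightarrow> x \<in> carrier M \<Longrightarrow> f x \<in> carrier M"
  unfolding mod_end_def by auto
lemma me_ext: "f \<in> mod_end R M \<Longrightarrow> f \<in> extensional (carrier M)"
  unfolding mod_end_def by (auto simp: PiE_def)
lemma me_add: "f \<in> mod_end R M \<Longrightarrow> x \<in> carrier M \<Longrightarrow> y \<in> carrier M \<Longrightarrow> f (x \<oplus>\<^bsub>M\<^esub> y) = f x \<oplus>\<^bsub>M\<^esub> f y"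
  unfolding mod_end_def by auto
lemma me_sm: "f \<in> mod_end R M \<Longrightarrow> a \<in> carrier R \<Longrightarrow> x \<in> carrier M \<Longrightarrow> f (a \<odot>\<^bsub>M\<^esub> x) = a \<odot>\<^bsub>M\<^esub> f x"
  unfolding mod_end_def by auto

lemma add_zero:
  assumes "\<And>x. x \<in> carrier M \<Longrightarrow> f x \<in> carrier M"
    "\<And>x y. x \<in> carrier M \<Longrightarrow> y \<in> carrier M \<Longrightarrow> f (x \<oplus>\<^bsub>M\<^esub> y) = f x \<oplus>\<^bsub>M\<^esub> f y"
  shows "f \<zero>\<^bsub>M\<^esub> = \<zero>\<^bsub>M\<^esub>"
proof -
  have "f \<zero>\<^bsub>M\<^esub> \<oplus>\<^bsub>M\<^esub> f \<zero>\<^bsub>M\<^esub> = f \<zero>\<^bsub>M\<^esub>" using assms(2)[of "\<zero>\<^bsub>M\<^esub>" "\<zero>\<^bsub>M\<^esub>"] by simp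
  thus ?thesis using M.add.l_cancel_one[of "f \<zero>\<^bsub>M\<^esub>" "f \<zero>\<^bsub>M\<^esub>"] assms(1) by simp
qed

lemma add_neg:
  assumes "\<And>x. x \<in> carrier M \<Longrightarrow> f x \<in> carrier M"
    "\<And>x y. x \<in> carrier M \<Longrightarrow> y \<in> carrier M \<Longrightarrow> f (x \<oplus>\<^bsub>M\<^esub> y) = f x \<oplus>\<^bsub>M\<^esub> f y"
    and x: "x \<in> carrier M"
  shows "f (\<ominus>\<^bsub>M\<^esub> x) = \<ominus>\<^bsub>M\<^esub> f x"
proof -
  have "f (\<ominus>\<^bsub>M\<^esub> x) \<oplus>\<^bsub>M\<^esub> f x = \<zero>\<^bsub>M\<^esub>"
    using assms(2)[of "\<ominus>\<^bsub>M\<^esub> x" x] x add_zero[OF assms(1,2)] M.l_neg by simp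
  thus ?thesis using M.minus_equality assms(1) x by auto
qed

lemma add_minus:
  assumes "\<And>x. x \<in> carrier M \<Longrightarrow> f x \<in> carrier M"
    "\<And>x y. x \<in> carrier M \<Longrightarrow> y \<in> carrier M \<Longrightarrow> f (x \<oplus>\<^bsub>M\<^esub> y) = f x \<oplus>\<^bsub>M\<^esub> f y"
    and x: "x \<in> carrier M" and y: "y \<in> carrier M"
  shows "f (x \<ominus>\<^bsub>M\<^esub> y) = f x \<ominus>\<^bsub>M\<^esub> f y"
  using assms add_neg[OF assms(1,2) y] by (simp add: M.minus_eq)

lemma add_finsum:
  assumes "\<And>x. x \<in> carrier M \<Longrightarrow> f x \<in> carrier M"
    "\<And>x y. x \<in> carrier M \<Longrightarrow> y \<in> carrier M \<Longrightarrow> f (x \<oplus>\<^bsub>M\<^esub> y) = f x \<oplus>\<^bsub>M\<^esub> f y"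
    and S: "finite S" and c: "c \<in> S \<rightarrow> carrier M"
  shows "f (finsum M c S) = finsum M (\<lambda>i. f (c i)) S"
  using S c
proof (induction S rule: finite_induct)
  case empty
  then show ?case using add_zero[OF assms(1,2)] by simp
next
  case (insert j S)
  have cS: "c \<in> S \<rightarrow> carrier M" and cj: "c j \<in> carrier M" using insert by auto
  have fc: "(\<lambda>i. f (c i)) \<in> S \<rightarrow> carrier M" using cS assms(1) by auto
  have "f (finsum M c (insert j S)) = f (c j \<oplus>\<^bsub>M\<^esub> finsum M c S)"
    using insert cS cj by (simp add: M.finsum_insert)
  also have "\<dots> = f (c j) \<oplus>\<^bsub>M\<^esub> finsum M (\<lambda>i. f (c i)) S"
    using assms(2) cj cS M.finsum_closed insert by simp
  also have "\<dots> = finsum M (\<lambda>i. f (c i)) (insert j S)"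
    using insert fc assms(1) cj by (simp add: M.finsum_insert)
  finally show ?case .
qed

lemma minus_zero_iff: "u \<in> carrier M \<Longrightarrow> v \<in> carrier M \<Longrightarrow> (u \<ominus>\<^bsub>M\<^esub> v = \<zero>\<^bsub>M\<^esub>) = (u = v)"
  by (metis M.a_assoc M.add.inv_closed M.l_neg M.l_zero M.minus_eq M.r_neg M.r_zero)

lemma smult_zero: "a \<in> carrier R \<Longrightarrow> a \<odot>\<^bsub>M\<^esub> \<zero>\<^bsub>M\<^esub> = \<zero>\<^bsub>M\<^esub>"
  using add_zero[of "\<lambda>x. a \<odot>\<^bsub>M\<^esub> x"] smult_r_distr by simp

lemma smult_minus: "a \<in> carrier R \<Longrightarrow> x \<in> carrier M \<Longrightarrow> y \<in> carrier M \<Longrightarrow>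
   a \<odot>\<^bsub>M\<^esub> (x \<ominus>\<^bsub>M\<^esub> y) = a \<odot>\<^bsub>M\<^esub> x \<ominus>\<^bsub>M\<^esub> a \<odot>\<^bsub>M\<^esub> y"
  using add_minus[of "\<lambda>x. a \<odot>\<^bsub>M\<^esub> x"] smult_r_distr by simp

lemma me_zero: "f \<in> mod_end R M \<Longrightarrow> f \<zero>\<^bsub>M\<^esub> = \<zero>\<^bsub>M\<^esub>"
  using add_zero[of f] me_closed me_add by blast
lemma me_minus: "f \<in> mod_end R M \<Longrightarrow> x \<in> carrier M \<Longrightarrow> y \<in> carrier M \<Longrightarrow> f (x \<ominus>\<^bsub>M\<^esub> y) = f x \<ominus>\<^bsub>M\<^esub> f y"
  using add_minus[of f] me_closed me_add by blast
lemma me_finsum: "f \<in> mod_end R M \<Longrightarrow> finite S \<Longrightarrow> c \<in> S \<rightarrow> carrier M \<Longrightarrow> f (finsum M c S) = finsum M (\<lambda>i. f (c i)) S"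
  using add_finsum[of f] me_closed me_add by blast

lemma me_compose: "f \<in> mod_end R M \<Longrightarrow> g \<in> mod_end R M \<Longrightarrow> compose (carrier M) f g \<in> mod_end R M"
  unfolding mod_end_def compose_def by (auto simp: PiE_def Pi_def)

lemma me_diff: "f \<in> mod_end R M \<Longrightarrow> g \<in> mod_end R M \<Longrightarrow> (\<lambda>z\<in>carrier M. f z \<ominus>\<^bsub>M\<^esub> g z) \<in> mod_end R M"
proof -
  assume f: "f \<in> mod_end R M" and g: "g \<in> mod_end R M"
  have cl: "\<And>x. x \<in> carrier M \<Longrightarrow> f x \<in> carrier M \<and> g x \<in> carrier M" using f g me_closed by blast
  show ?thesis unfolding mod_end_def
  proof (intro CollectI conjI ballI)
    show "(\<lambda>z\<in>carrier M. f z \<ominus>\<^bsub>M\<^esub> g z) \<in> carrier M \<rightarrow>\<^sub>E carrier M" using cl by auto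
  next
    fix x y assume x: "x \<in> carrier M" and y: "y \<in> carrier M"
    have "f (x \<oplus>\<^bsub>M\<^esub> y) \<ominus>\<^bsub>M\<^esub> g (x \<oplus>\<^bsub>M\<^esub> y) = (f x \<ominus>\<^bsub>M\<^esub> g x) \<oplus>\<^bsub>M\<^esub> (f y \<ominus>\<^bsub>M\<^esub> g y)"
      using me_add[OF f x y] me_add[OF g x y] cl x y
      by (simp add: M.minus_eq M.minus_add M.a_ac)
    then show "(\<lambda>z\<in>carrier M. f z \<ominus>\<^bsub>M\<^esub> g z) (x \<oplus>\<^bsub>M\<^esub> y) =
         (\<lambda>z\<in>carrier M. f z \<ominus>\<^bsub>M\<^esub> g z) x \<oplus>\<^bsub>M\<^esub> (\<lambda>z\<in>carrier M. f z \<ominus>\<^bsub>M\<^esub> g z) y"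
      using x y by simp
  next
    fix a x assume a: "a \<in> carrier R" and x: "x \<in> carrier M"
    show "(\<lambda>z\<in>carrier M. f z \<ominus>\<^bsub>M\<^esub> g z) (a \<odot>\<^bsub>M\<^esub> x) = a \<odot>\<^bsub>M\<^esub> (\<lambda>z\<in>carrier M. f z \<ominus>\<^bsub>M\<^esub> g z) x"
      using a x me_sm[OF f a x] me_sm[OF g a x] smult_minus cl by simp
  qed
qed

end



abbreviation ctr where "ctr R M \<equiv> {z \<in> mod_end R M. \<forall>b\<in>mod_end R M. compose (carrier M) z b = compose (carrier M) b z}"

lemma CE_unfold: "centrally_essential (End_ring R M) \<longleftrightarrow>
  (\<forall>a\<in>mod_end R M. a \<noteq> (\<lambda>x\<in>carrier M. \<zero>\<^bsub>M\<^esub>) \<longrightarrow>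
     (\<exists>x\<in>ctr R M. \<exists>y\<in>ctr R M. x \<noteq> (\<lambda>x\<in>carrier M. \<zero>\<^bsub>M\<^esub>) \<and> y \<noteq> (\<lambda>x\<in>carrier M. \<zero>\<^bsub>M\<^esub>)
        \<and> compose (carrier M) a x = y))"
  unfolding centrally_essential_def ring_center_def End_ring_def by simp

lemma compose_app: "compose S f g = compose S g' f' \<Longrightarrow> z \<in> S \<Longrightarrow> f (g z) = g' (f' z)"
  by (metis compose_eq)

context left_module begin

lemma zero_fun: "f \<in> mod_end R M \<Longrightarrow> (f = (\<lambda>x\<in>carrier M. \<zero>\<^bsub>M\<^esub>)) = (\<forall>z\<in>carrier M. f z = \<zero>\<^bsub>M\<^esub>)"
  using me_ext[of f] by (auto simp: extensional_def fun_eq_iff)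

lemma killK:
  assumes ce: "centrally_essential (End_ring R M)" and e: "e \<in> mod_end R M" and g: "g \<in> mod_end R M"
    and H: "(\<forall>v\<in>carrier M. g (e v) = g v \<and> e (g v) = \<zero>\<^bsub>M\<^esub>) \<or> (\<forall>v\<in>carrier M. g (e v) = \<zero>\<^bsub>M\<^esub> \<and> e (g v) = g v)"
  shows "\<forall>v\<in>carrier M. g v = \<zero>\<^bsub>M\<^esub>"
proof (rule ccontr)
  assume "\<not> ?thesis"
  hence "g \<noteq> (\<lambda>x\<in>carrier M. \<zero>\<^bsub>M\<^esub>)" using zero_fun[OF g] by blast
  hence "\<exists>x\<in>ctr R M. \<exists>y\<in>ctr R M. x \<noteq> (\<lambda>x\<in>carrier M. \<zero>\<^bsub>M\<^esub>) \<and> y \<noteq> (\<lambda>x\<in>carrier M. \<zero>\<^bsub>M\<^esub>)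
        \<and> compose (carrier M) g x = y" using bspec[OF ce[unfolded CE_unfold] g] by (rule mp[rotated])
  then obtain x y where x: "x \<in> ctr R M" and y: "y \<in> ctr R M" and y0: "y \<noteq> (\<lambda>x\<in>carrier M. \<zero>\<^bsub>M\<^esub>)"
    and gxy: "compose (carrier M) g x = y" by (elim bexE conjE) simp
  have yw: "\<And>w. w \<in> carrier M \<Longrightarrow> y w = g (x w)" using gxy by (auto simp: compose_def)
  have ye: "\<And>w. w \<in> carrier M \<Longrightarrow> y (e w) = e (y w)" using y e compose_app[of "carrier M" y e e y] by simp
  have xe: "\<And>w. w \<in> carrier M \<Longrightarrow> x (e w) = e (x w)" using x e compose_app[of "carrier M" x e e x] by simp
  have xc: "\<And>w. w \<in> carrier M \<Longrightarrow> x w \<in> carrier M" using x me_closed by blast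
  have ec: "\<And>w. w \<in> carrier M \<Longrightarrow> e w \<in> carrier M" using e me_closed by blast
  have "\<forall>w\<in>carrier M. y w = \<zero>\<^bsub>M\<^esub>"
  proof
    fix w assume w: "w \<in> carrier M"
    from H show "y w = \<zero>\<^bsub>M\<^esub>"
    proof
      assume h: "\<forall>v\<in>carrier M. g (e v) = g v \<and> e (g v) = \<zero>\<^bsub>M\<^esub>"
      have "y w = g (e (x w))" using yw w h xc by simp
      also have "\<dots> = y (e w)" using xe w yw ec by simp
      also have "\<dots> = e (g (x w))" using ye w yw by simp
      also have "\<dots> = \<zero>\<^bsub>M\<^esub>" using h xc w by simp
      finally show ?thesis .
    next
      assume h: "\<forall>v\<in>carrier M. g (e v) = \<zero>\<^bsub>M\<^esub> \<and> e (g v) = g v"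
      have "y w = e (y w)" using yw w h xc by simp
      also have "\<dots> = g (x (e w))" using ye w yw ec by simp
      also have "\<dots> = \<zero>\<^bsub>M\<^esub>" using h xc w xe by simp
      finally show ?thesis .
    qed
  qed
  thus False using y0 zero_fun y by blast
qed

lemma idem_comm:
  assumes ce: "centrally_essential (End_ring R M)" and e: "e \<in> mod_end R M"
    and ee: "\<And>z. z \<in> carrier M \<Longrightarrow> e (e z) = e z" and f: "f \<in> mod_end R M" and z: "z \<in> carrier M"
  shows "e (f z) = f (e z)"
proof -
  have ec: "\<And>w. w \<in> carrier M \<Longrightarrow> e w \<in> carrier M" using e me_closed by blast
  have fc: "\<And>w. w \<in> carrier M \<Longrightarrow> f w \<in> carrier M" using f me_closed by blast
  define g where "g = (\<lambda>z\<in>carrier M. f (e z) \<ominus>\<^bsub>M\<^esub> e (f (e z)))"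
  have "compose (carrier M) f e \<in> mod_end R M" using me_compose e f by blast
  hence "compose (carrier M) e (compose (carrier M) f e) \<in> mod_end R M" using me_compose e by blast
  hence "(\<lambda>z\<in>carrier M. compose (carrier M) f e z \<ominus>\<^bsub>M\<^esub> compose (carrier M) e (compose (carrier M) f e) z) \<in> mod_end R M"
    using me_diff \<open>compose (carrier M) f e \<in> mod_end R M\<close> by blast
  moreover have "(\<lambda>z\<in>carrier M. compose (carrier M) f e z \<ominus>\<^bsub>M\<^esub> compose (carrier M) e (compose (carrier M) f e) z) = g"
    unfolding g_def by (rule restrict_ext) (simp add: compose_def)
  ultimately have g: "g \<in> mod_end R M" by simp
  have "\<forall>v\<in>carrier M. g v = \<zero>\<^bsub>M\<^esub>"
  proof (rule killK[OF ce e g], rule disjI1, intro ballI conjI)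
    fix v assume v: "v \<in> carrier M"
    show "g (e v) = g v" unfolding g_def using v ec ee by simp
    show "e (g v) = \<zero>\<^bsub>M\<^esub>" unfolding g_def using v ec ee fc me_minus[OF e] minus_zero_iff by simp
  qed
  hence c1: "f (e z) = e (f (e z))" using z minus_zero_iff ec fc unfolding g_def by simp
  define h where "h = (\<lambda>z\<in>carrier M. e (f z) \<ominus>\<^bsub>M\<^esub> e (f (e z)))"
  have "compose (carrier M) e f \<in> mod_end R M" using me_compose e f by blast
  moreover have "compose (carrier M) e (compose (carrier M) f e) \<in> mod_end R M" using me_compose e f by blast
  ultimately have "(\<lambda>z\<in>carrier M. compose (carrier M) e f z \<ominus>\<^bsub>M\<^esub> compose (carrier M) e (compose (carrier M) f e) z) \<in> mod_end R M"
    using me_diff by blast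
  moreover have "(\<lambda>z\<in>carrier M. compose (carrier M) e f z \<ominus>\<^bsub>M\<^esub> compose (carrier M) e (compose (carrier M) f e) z) = h"
    unfolding h_def by (rule restrict_ext) (simp add: compose_def)
  ultimately have h: "h \<in> mod_end R M" by simp
  have "\<forall>v\<in>carrier M. h v = \<zero>\<^bsub>M\<^esub>"
  proof (rule killK[OF ce e h], rule disjI2, intro ballI conjI)
    fix v assume v: "v \<in> carrier M"
    show "h (e v) = \<zero>\<^bsub>M\<^esub>" unfolding h_def using v ec ee fc minus_zero_iff by simp
    show "e (h v) = h v" unfolding h_def using v ec ee fc me_minus[OF e] by simp
  qed
  hence "e (f z) = e (f (e z))" using z minus_zero_iff ec fc unfolding h_def by simp
  thus ?thesis using c1 by simp
qed

end



locale dd = left_module R M for R :: "('a, 'c) ring_scheme" and M :: "('a, 'b, 'd) module_scheme" +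
  fixes I :: "'i set" and A :: "'i \<Rightarrow> 'b set"
  assumes dd: "direct_decomposition R M I A"
begin

lemma sub: "i \<in> I \<Longrightarrow> submod R M (A i)" using dd by (simp add: direct_decomposition_def)
lemma subc: "i \<in> I \<Longrightarrow> A i \<subseteq> carrier M" using sub[of i] unfolding submod_def by blast
lemma sub0: "i \<in> I \<Longrightarrow> \<zero>\<^bsub>M\<^esub> \<in> A i" using sub[of i] unfolding submod_def by blast
lemma subadd: "i \<in> I \<Longrightarrow> x \<in> A i \<Longrightarrow> y \<in> A i \<Longrightarrow> x \<oplus>\<^bsub>M\<^esub> y \<in> A i" using sub[of i] unfolding submod_def by blast
lemma subneg: "i \<in> I \<Longrightarrow> x \<in> A i \<Longrightarrow> \<ominus>\<^bsub>M\<^esub> x \<in> A i" using sub[of i] unfolding submod_def by blast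
lemma subsm: "i \<in> I \<Longrightarrow> a \<in> carrier R \<Longrightarrow> x \<in> A i \<Longrightarrow> a \<odot>\<^bsub>M\<^esub> x \<in> A i" using sub[of i] unfolding submod_def by blast

definition PP where "PP z c \<longleftrightarrow> c \<in> extensional I \<and> (\<forall>i\<in>I. c i \<in> A i)
          \<and> finite {i\<in>I. c i \<noteq> \<zero>\<^bsub>M\<^esub>}
          \<and> z = finsum M c {i\<in>I. c i \<noteq> \<zero>\<^bsub>M\<^esub>}"

definition cmp where "cmp z = (THE c. PP z c)"

lemma ex1: "z \<in> carrier M \<Longrightarrow> \<exists>!c. PP z c" using dd unfolding direct_decomposition_def PP_def by (simp only:)

lemma cmp_P: "z \<in> carrier M \<Longrightarrow> PP z (cmp z)"
  unfolding cmp_def by (rule theI'[OF ex1])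

lemma uniq:
  assumes z: "z \<in> carrier M" and c: "c \<in> extensional I" "\<And>i. i \<in> I \<Longrightarrow> c i \<in> A i"
    and S: "finite S" "S \<subseteq> I" "\<And>i. i \<in> I \<Longrightarrow> i \<notin> S \<Longrightarrow> c i = \<zero>\<^bsub>M\<^esub>"
    and eq: "z = finsum M c S"
  shows "cmp z = c"
proof -
  have sup: "{i\<in>I. c i \<noteq> \<zero>\<^bsub>M\<^esub>} \<subseteq> S" using S by blast
  hence fin: "finite {i\<in>I. c i \<noteq> \<zero>\<^bsub>M\<^esub>}" using S finite_subset by blast
  have cc: "c \<in> S \<rightarrow> carrier M" using c S subc by blast
  have "finsum M c {i\<in>I. c i \<noteq> \<zero>\<^bsub>M\<^esub>} = finsum M c S"
    by (rule M.add.finprod_mono_neutral_cong_left) (use S sup cc in auto)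
  hence "PP z c" unfolding PP_def using c fin eq by auto
  thus ?thesis unfolding cmp_def by (rule the1_equality[OF ex1[OF z]])
qed

lemma cmp_ext: "z \<in> carrier M \<Longrightarrow> cmp z \<in> extensional I" using cmp_P unfolding PP_def by blast
lemma cmp_in: "z \<in> carrier M \<Longrightarrow> i \<in> I \<Longrightarrow> cmp z i \<in> A i" using cmp_P unfolding PP_def by blast
lemma cmp_fin: "z \<in> carrier M \<Longrightarrow> finite {i\<in>I. cmp z i \<noteq> \<zero>\<^bsub>M\<^esub>}" using cmp_P unfolding PP_def by blast
lemma cmp_sum0: "z \<in> carrier M \<Longrightarrow> z = finsum M (cmp z) {i\<in>I. cmp z i \<noteq> \<zero>\<^bsub>M\<^esub>}" using cmp_P unfolding PP_def by blast
lemma cmp_inc: "z \<in> carrier M \<Longrightarrow> i \<in> I \<Longrightarrow> cmp z i \<in> carrier M" using cmp_in subc by blast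

lemma cmp_sum:
  assumes z: "z \<in> carrier M" and S: "finite S" "{i\<in>I. cmp z i \<noteq> \<zero>\<^bsub>M\<^esub>} \<subseteq> S" "S \<subseteq> I"
  shows "z = finsum M (cmp z) S"
proof -
  have "finsum M (cmp z) {i\<in>I. cmp z i \<noteq> \<zero>\<^bsub>M\<^esub>} = finsum M (cmp z) S"
    by (rule M.add.finprod_mono_neutral_cong_left) (use S z cmp_inc in auto)
  thus ?thesis using cmp_sum0[OF z] by simp
qed

lemma cmp_A: assumes j: "j \<in> I" and w: "w \<in> A j" shows "cmp w = (\<lambda>i\<in>I. if i = j then w else \<zero>\<^bsub>M\<^esub>)"
proof (rule uniq)
  show "w \<in> carrier M" using w j subc by blast
  show "(\<lambda>i\<in>I. if i = j then w else \<zero>\<^bsub>M\<^esub>) \<in> extensional I" by simp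
  show "\<And>i. i \<in> I \<Longrightarrow> (\<lambda>i\<in>I. if i = j then w else \<zero>\<^bsub>M\<^esub>) i \<in> A i" using w sub0 by simp
  show "finite {j}" "{j} \<subseteq> I" using j by auto
  show "\<And>i. i \<in> I \<Longrightarrow> i \<notin> {j} \<Longrightarrow> (\<lambda>i\<in>I. if i = j then w else \<zero>\<^bsub>M\<^esub>) i = \<zero>\<^bsub>M\<^esub>" by simp
  show "w = finsum M (\<lambda>i\<in>I. if i = j then w else \<zero>\<^bsub>M\<^esub>) {j}"
    using j \<open>w \<in> carrier M\<close> by (simp add: M.finsum_insert)
qed

definition pr where "pr j = (\<lambda>z\<in>carrier M. cmp z j)"

lemma pr_A: "j \<in> I \<Longrightarrow> z \<in> carrier M \<Longrightarrow> pr j z \<in> A j" unfolding pr_def using cmp_in by simp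
lemma pr_c: "j \<in> I \<Longrightarrow> z \<in> carrier M \<Longrightarrow> pr j z \<in> carrier M" using pr_A subc by blast
lemma pr_id: "j \<in> I \<Longrightarrow> w \<in> A j \<Longrightarrow> pr j w = w" unfolding pr_def using cmp_A subc by auto
lemma pr_pr: "j \<in> I \<Longrightarrow> z \<in> carrier M \<Longrightarrow> pr j (pr j z) = pr j z" using pr_id pr_A by blast

lemma cmp_hom:
  assumes f: "\<And>x. x \<in> carrier M \<Longrightarrow> f x \<in> carrier M"
    "\<And>x y. x \<in> carrier M \<Longrightarrow> y \<in> carrier M \<Longrightarrow> f (x \<oplus>\<^bsub>M\<^esub> y) = f x \<oplus>\<^bsub>M\<^esub> f y"
    and fA: "\<And>i x. i \<in> I \<Longrightarrow> x \<in> A i \<Longrightarrow> f x \<in> A i"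
    and z: "z \<in> carrier M"
  shows "cmp (f z) = (\<lambda>i\<in>I. f (cmp z i))"
proof -
  let ?S = "{i\<in>I. cmp z i \<noteq> \<zero>\<^bsub>M\<^esub>}"
  have f0: "f \<zero>\<^bsub>M\<^esub> = \<zero>\<^bsub>M\<^esub>" using add_zero[OF f] .
  have fz: "f z = finsum M (\<lambda>i. f (cmp z i)) ?S"
    using cmp_sum0[OF z] add_finsum[OF f cmp_fin[OF z], of "cmp z"] cmp_inc[OF z] by auto
  show ?thesis
  proof (rule uniq)
    show "f z \<in> carrier M" using f z by blast
    show "(\<lambda>i\<in>I. f (cmp z i)) \<in> extensional I" by simp
    show "\<And>i. i \<in> I \<Longrightarrow> (\<lambda>i\<in>I. f (cmp z i)) i \<in> A i" using fA cmp_in z by simp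
    show "finite ?S" "?S \<subseteq> I" using cmp_fin z by auto
    show "\<And>i. i \<in> I \<Longrightarrow> i \<notin> ?S \<Longrightarrow> (\<lambda>i\<in>I. f (cmp z i)) i = \<zero>\<^bsub>M\<^esub>" using f0 by auto
    show "f z = finsum M (\<lambda>i\<in>I. f (cmp z i)) ?S"
      unfolding fz by (rule M.finsum_cong') (use f cmp_inc z in auto)
  qed
qed

lemma cmp_add:
  assumes z: "z \<in> carrier M" and w: "w \<in> carrier M"
  shows "cmp (z \<oplus>\<^bsub>M\<^esub> w) = (\<lambda>i\<in>I. cmp z i \<oplus>\<^bsub>M\<^esub> cmp w i)"
proof -
  let ?S = "{i\<in>I. cmp z i \<noteq> \<zero>\<^bsub>M\<^esub>} \<union> {i\<in>I. cmp w i \<noteq> \<zero>\<^bsub>M\<^esub>}"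
  have S: "finite ?S" "?S \<subseteq> I" using cmp_fin z w by auto
  have zs: "z = finsum M (cmp z) ?S" by (rule cmp_sum) (use z S in auto)
  have ws: "w = finsum M (cmp w) ?S" by (rule cmp_sum) (use w S in auto)
  have cz: "cmp z \<in> ?S \<rightarrow> carrier M" "cmp w \<in> ?S \<rightarrow> carrier M" using cmp_inc z w S by auto
  show ?thesis
  proof (rule uniq)
    show "z \<oplus>\<^bsub>M\<^esub> w \<in> carrier M" using z w by simp
    show "(\<lambda>i\<in>I. cmp z i \<oplus>\<^bsub>M\<^esub> cmp w i) \<in> extensional I" by simp
    show "\<And>i. i \<in> I \<Longrightarrow> (\<lambda>i\<in>I. cmp z i \<oplus>\<^bsub>M\<^esub> cmp w i) i \<in> A i" using subadd cmp_in z w by simp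
    show "finite ?S" "?S \<subseteq> I" using S by auto
    show "\<And>i. i \<in> I \<Longrightarrow> i \<notin> ?S \<Longrightarrow> (\<lambda>i\<in>I. cmp z i \<oplus>\<^bsub>M\<^esub> cmp w i) i = \<zero>\<^bsub>M\<^esub>" by auto
    have "z \<oplus>\<^bsub>M\<^esub> w = finsum M (\<lambda>i. cmp z i \<oplus>\<^bsub>M\<^esub> cmp w i) ?S"
      using M.finsum_addf[OF cz] zs ws by simp
    also have "\<dots> = finsum M (\<lambda>i\<in>I. cmp z i \<oplus>\<^bsub>M\<^esub> cmp w i) ?S"
      by (rule M.finsum_cong') (use cz S z w cmp_inc in auto)
    finally show "z \<oplus>\<^bsub>M\<^esub> w = finsum M (\<lambda>i\<in>I. cmp z i \<oplus>\<^bsub>M\<^esub> cmp w i) ?S" .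
  qed
qed

lemma pr_me: assumes j: "j \<in> I" shows "pr j \<in> mod_end R M"
  unfolding mod_end_def
proof (intro CollectI conjI ballI)
  show "pr j \<in> carrier M \<rightarrow>\<^sub>E carrier M" using pr_c j by (auto simp: pr_def)
next
  fix x y assume x: "x \<in> carrier M" and y: "y \<in> carrier M"
  show "pr j (x \<oplus>\<^bsub>M\<^esub> y) = pr j x \<oplus>\<^bsub>M\<^esub> pr j y"
    unfolding pr_def using x y j cmp_add by simp
next
  fix a x assume a: "a \<in> carrier R" and x: "x \<in> carrier M"
  have "cmp (a \<odot>\<^bsub>M\<^esub> x) = (\<lambda>i\<in>I. a \<odot>\<^bsub>M\<^esub> cmp x i)"
    by (rule cmp_hom[of "\<lambda>x. a \<odot>\<^bsub>M\<^esub> x"]) (use a x subsm smult_r_distr in auto)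
  thus "pr j (a \<odot>\<^bsub>M\<^esub> x) = a \<odot>\<^bsub>M\<^esub> pr j x"
    unfolding pr_def using a x j by simp
qed

lemma pr_comm:
  assumes f: "f \<in> mod_end R M" and fA: "\<And>i x. i \<in> I \<Longrightarrow> x \<in> A i \<Longrightarrow> f x \<in> A i"
    and j: "j \<in> I" and z: "z \<in> carrier M"
  shows "pr j (f z) = f (pr j z)"
proof -
  have "cmp (f z) = (\<lambda>i\<in>I. f (cmp z i))"
    by (rule cmp_hom) (use f fA z me_closed me_add in auto)
  thus ?thesis unfolding pr_def using j z f me_closed by simp
qed

lemma nonzero_A:
  assumes f: "f \<in> mod_end R M" and z: "z \<in> carrier M" and fz: "f z \<noteq> \<zero>\<^bsub>M\<^esub>"
  shows "\<exists>j\<in>I. \<exists>w\<in>A j. f w \<noteq> \<zero>\<^bsub>M\<^esub>"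
proof (rule ccontr)
  assume "\<not> ?thesis"
  hence h: "\<And>j. j \<in> I \<Longrightarrow> f (cmp z j) = \<zero>\<^bsub>M\<^esub>" using cmp_in z by blast
  let ?S = "{i\<in>I. cmp z i \<noteq> \<zero>\<^bsub>M\<^esub>}"
  have "f z = finsum M (\<lambda>i. f (cmp z i)) ?S"
    using cmp_sum0[OF z] me_finsum[OF f cmp_fin[OF z], of "cmp z"] cmp_inc[OF z] by auto
  also have "\<dots> = finsum M (\<lambda>i. \<zero>\<^bsub>M\<^esub>) ?S" by (rule M.finsum_cong') (use h in auto)
  also have "\<dots> = \<zero>\<^bsub>M\<^esub>" by simp
  finally show False using fz by simp
qed

end


context dd begin

lemma CE_sub: "centrally_essential (End_ring R (M\<lparr>carrier := B\<rparr>)) \<longleftrightarrow>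
  (\<forall>a\<in>mod_end R (M\<lparr>carrier := B\<rparr>). a \<noteq> (\<lambda>x\<in>B. \<zero>\<^bsub>M\<^esub>) \<longrightarrow>
     (\<exists>x\<in>{z \<in> mod_end R (M\<lparr>carrier := B\<rparr>). \<forall>b\<in>mod_end R (M\<lparr>carrier := B\<rparr>). compose B z b = compose B b z}.
      \<exists>y\<in>{z \<in> mod_end R (M\<lparr>carrier := B\<rparr>). \<forall>b\<in>mod_end R (M\<lparr>carrier := B\<rparr>). compose B z b = compose B b z}.
       x \<noteq> (\<lambda>x\<in>B. \<zero>\<^bsub>M\<^esub>) \<and> y \<noteq> (\<lambda>x\<in>B. \<zero>\<^bsub>M\<^esub>)
        \<and> compose B a x = y))"
  unfolding centrally_essential_def ring_center_def End_ring_def by simp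

lemma mod_end_sub: "mod_end R (M\<lparr>carrier := B\<rparr>) = {f. f \<in> B \<rightarrow>\<^sub>E B
     \<and> (\<forall>x\<in>B. \<forall>y\<in>B. f (x \<oplus>\<^bsub>M\<^esub> y) = f x \<oplus>\<^bsub>M\<^esub> f y)
     \<and> (\<forall>a\<in>carrier R. \<forall>x\<in>B. f (a \<odot>\<^bsub>M\<^esub> x) = a \<odot>\<^bsub>M\<^esub> f x)}"
  unfolding mod_end_def by simp

lemma sme_in: "b \<in> mod_end R (M\<lparr>carrier := B\<rparr>) \<Longrightarrow> u \<in> B \<Longrightarrow> b u \<in> B"
  unfolding mod_end_sub by auto
lemma sme_ext: "b \<in> mod_end R (M\<lparr>carrier := B\<rparr>) \<Longrightarrow> b \<in> extensional B"
  unfolding mod_end_sub by (auto simp: PiE_def)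
lemma sme_add: "b \<in> mod_end R (M\<lparr>carrier := B\<rparr>) \<Longrightarrow> u \<in> B \<Longrightarrow> v \<in> B \<Longrightarrow> b (u \<oplus>\<^bsub>M\<^esub> v) = b u \<oplus>\<^bsub>M\<^esub> b v"
  unfolding mod_end_sub by auto
lemma sme_sm: "b \<in> mod_end R (M\<lparr>carrier := B\<rparr>) \<Longrightarrow> a \<in> carrier R \<Longrightarrow> u \<in> B \<Longrightarrow> b (a \<odot>\<^bsub>M\<^esub> u) = a \<odot>\<^bsub>M\<^esub> b u"
  unfolding mod_end_sub by auto
lemma sme_zero: "b \<in> mod_end R (M\<lparr>carrier := B\<rparr>) \<Longrightarrow> (b = (\<lambda>x\<in>B. \<zero>\<^bsub>M\<^esub>)) = (\<forall>u\<in>B. b u = \<zero>\<^bsub>M\<^esub>)"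
  using sme_ext[of b] by (auto simp: extensional_def fun_eq_iff)

lemma restr_me: assumes B: "submod R M B" and f: "f \<in> mod_end R M" and fX: "\<And>x. x \<in> B \<Longrightarrow> f x \<in> B"
  shows "restrict f B \<in> mod_end R (M\<lparr>carrier := B\<rparr>)"
  unfolding mod_end_sub
proof (intro CollectI conjI ballI)
  show "restrict f B \<in> B \<rightarrow>\<^sub>E B" using fX by auto
next
  fix x y assume x: "x \<in> B" and y: "y \<in> B"
  have "x \<oplus>\<^bsub>M\<^esub> y \<in> B" using B x y unfolding submod_def by blast
  moreover have "x \<in> carrier M" "y \<in> carrier M" using B x y unfolding submod_def by blast+
  ultimately show "restrict f B (x \<oplus>\<^bsub>M\<^esub> y) = restrict f B x \<oplus>\<^bsub>M\<^esub> restrict f B y"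
    using x y me_add[OF f] by simp
next
  fix a x assume a: "a \<in> carrier R" and x: "x \<in> B"
  have "a \<odot>\<^bsub>M\<^esub> x \<in> B" using B x a unfolding submod_def by blast
  moreover have "x \<in> carrier M" using B x unfolding submod_def by blast
  ultimately show "restrict f B (a \<odot>\<^bsub>M\<^esub> x) = a \<odot>\<^bsub>M\<^esub> restrict f B x"
    using x a me_sm[OF f] by simp
qed

lemma ext_me: assumes j: "j \<in> I" and b: "b \<in> mod_end R (M\<lparr>carrier := A j\<rparr>)"
  shows "(\<lambda>z\<in>carrier M. b (pr j z)) \<in> mod_end R M"
  unfolding mod_end_def
proof (intro CollectI conjI ballI)
  show "(\<lambda>z\<in>carrier M. b (pr j z)) \<in> carrier M \<rightarrow>\<^sub>E carrier M"
    using sme_in[OF b] pr_A[OF j] subc[OF j] by auto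
next
  fix x y assume x: "x \<in> carrier M" and y: "y \<in> carrier M"
  show "(\<lambda>z\<in>carrier M. b (pr j z)) (x \<oplus>\<^bsub>M\<^esub> y) = (\<lambda>z\<in>carrier M. b (pr j z)) x \<oplus>\<^bsub>M\<^esub> (\<lambda>z\<in>carrier M. b (pr j z)) y"
    using x y me_add[OF pr_me[OF j]] sme_add[OF b] pr_A[OF j] by simp
next
  fix a x assume a: "a \<in> carrier R" and x: "x \<in> carrier M"
  show "(\<lambda>z\<in>carrier M. b (pr j z)) (a \<odot>\<^bsub>M\<^esub> x) = a \<odot>\<^bsub>M\<^esub> (\<lambda>z\<in>carrier M. b (pr j z)) x"
    using x a me_sm[OF pr_me[OF j]] sme_sm[OF b] pr_A[OF j] by simp
qed

end


context dd begin

lemma fwd_FI: assumes ce: "centrally_essential (End_ring R M)" and j: "j \<in> I"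
  shows "fully_invariant R M (A j)"
  unfolding fully_invariant_def
proof (intro conjI ballI subsetI)
  show "submod R M (A j)" using sub[OF j] .
next
  fix f x assume f: "f \<in> mod_end R M" and x: "x \<in> f ` A j"
  then obtain w where w: "w \<in> A j" and xw: "x = f w" by blast
  have wc: "w \<in> carrier M" using w subc[OF j] by blast
  have "f w = f (pr j w)" using pr_id[OF j w] by simp
  also have "\<dots> = pr j (f w)" using idem_comm[OF ce pr_me[OF j] pr_pr[OF j] f wc] by simp
  finally show "x \<in> A j" using xw pr_A[OF j] me_closed[OF f wc] by metis
qed

lemma fwd_CE: assumes ce: "centrally_essential (End_ring R M)" and j: "j \<in> I"
  shows "centrally_essential (End_ring R (M\<lparr>carrier := A j\<rparr>))"
  unfolding CE_sub
proof (intro ballI impI)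
  fix a assume a: "a \<in> mod_end R (M\<lparr>carrier := A j\<rparr>)" and a0: "a \<noteq> (\<lambda>x\<in>A j. \<zero>\<^bsub>M\<^esub>)"
  define ah where "ah = (\<lambda>z\<in>carrier M. a (pr j z))"
  have ah: "ah \<in> mod_end R M" unfolding ah_def using ext_me[OF j a] .
  obtain w0 where w0: "w0 \<in> A j" "a w0 \<noteq> \<zero>\<^bsub>M\<^esub>" using a0 sme_zero[OF a] by blast
  have w0c: "w0 \<in> carrier M" using w0 subc[OF j] by blast
  have "ah w0 \<noteq> \<zero>\<^bsub>M\<^esub>" unfolding ah_def using w0 w0c pr_id[OF j] by simp
  hence "ah \<noteq> (\<lambda>x\<in>carrier M. \<zero>\<^bsub>M\<^esub>)" using w0c zero_fun[OF ah] by blast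
  hence "\<exists>x\<in>ctr R M. \<exists>y\<in>ctr R M. x \<noteq> (\<lambda>x\<in>carrier M. \<zero>\<^bsub>M\<^esub>) \<and> y \<noteq> (\<lambda>x\<in>carrier M. \<zero>\<^bsub>M\<^esub>)
        \<and> compose (carrier M) ah x = y" using bspec[OF ce[unfolded CE_unfold] ah] by (rule mp[rotated])
  then obtain x y where x: "x \<in> ctr R M" and y: "y \<in> ctr R M" and y0: "y \<noteq> (\<lambda>x\<in>carrier M. \<zero>\<^bsub>M\<^esub>)"
    and gxy: "compose (carrier M) ah x = y" by (elim bexE conjE) simp
  have xme: "x \<in> mod_end R M" and yme: "y \<in> mod_end R M" using x y by simp_all
  have xcom: "\<And>b w. b \<in> mod_end R M \<Longrightarrow> w \<in> carrier M \<Longrightarrow> x (b w) = b (x w)"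
    using x compose_app[of "carrier M" x _ _ x] by simp
  have ycom: "\<And>b w. b \<in> mod_end R M \<Longrightarrow> w \<in> carrier M \<Longrightarrow> y (b w) = b (y w)"
    using y compose_app[of "carrier M" y _ _ y] by simp
  have yw: "\<And>w. w \<in> carrier M \<Longrightarrow> y w = ah (x w)" using gxy by (auto simp: compose_def)
  have Ac: "\<And>w. w \<in> A j \<Longrightarrow> w \<in> carrier M" using subc[OF j] by blast
  have xA: "\<And>w. w \<in> A j \<Longrightarrow> x w \<in> A j"
  proof -
    fix w assume w: "w \<in> A j"
    have "x w = x (pr j w)" using pr_id[OF j w] by simp
    also have "\<dots> = pr j (x w)" using xcom[OF pr_me[OF j] Ac[OF w]] .
    finally show "x w \<in> A j" using pr_A[OF j] me_closed[OF xme Ac[OF w]] by metis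
  qed
  have yA: "\<And>w. w \<in> A j \<Longrightarrow> y w \<in> A j"
  proof -
    fix w assume w: "w \<in> A j"
    have "y w = y (pr j w)" using pr_id[OF j w] by simp
    also have "\<dots> = pr j (y w)" using ycom[OF pr_me[OF j] Ac[OF w]] .
    finally show "y w \<in> A j" using pr_A[OF j] me_closed[OF yme Ac[OF w]] by metis
  qed
  obtain z where z: "z \<in> carrier M" and yz: "y z \<noteq> \<zero>\<^bsub>M\<^esub>" using y0 zero_fun[OF yme] by blast
  have "y (pr j z) = ah (x (pr j z))" using yw pr_c[OF j z] by simp
  also have "\<dots> = ah (pr j (x z))" using xcom[OF pr_me[OF j] z] by simp
  also have "\<dots> = a (pr j (x z))" unfolding ah_def using pr_pr[OF j] me_closed[OF xme z] pr_c[OF j] by simp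
  also have "\<dots> = y z" unfolding yw[OF z] ah_def using me_closed[OF xme z] by simp
  finally have yw1: "y (pr j z) \<noteq> \<zero>\<^bsub>M\<^esub>" using yz by simp
  let ?w = "pr j z"
  have wA: "?w \<in> A j" using pr_A[OF j z] .
  have ahz: "ah \<zero>\<^bsub>M\<^esub> = \<zero>\<^bsub>M\<^esub>" using me_zero[OF ah] .
  have xw1: "x ?w \<noteq> \<zero>\<^bsub>M\<^esub>" using yw1 yw[OF Ac[OF wA]] ahz by auto
  define xi where "xi = restrict x (A j)"
  define yi where "yi = restrict y (A j)"
  have xi: "xi \<in> mod_end R (M\<lparr>carrier := A j\<rparr>)" unfolding xi_def using restr_me[OF sub[OF j] xme xA] .
  have yi: "yi \<in> mod_end R (M\<lparr>carrier := A j\<rparr>)" unfolding yi_def using restr_me[OF sub[OF j] yme yA] .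
  have cen: "\<And>t. t \<in> ctr R M \<Longrightarrow> (\<And>w. w \<in> A j \<Longrightarrow> t w \<in> A j) \<Longrightarrow>
     \<forall>b\<in>mod_end R (M\<lparr>carrier := A j\<rparr>). compose (A j) (restrict t (A j)) b = compose (A j) b (restrict t (A j))"
  proof (intro ballI)
    fix t b assume t: "t \<in> ctr R M" and tA: "\<And>w. w \<in> A j \<Longrightarrow> t w \<in> A j"
      and b: "b \<in> mod_end R (M\<lparr>carrier := A j\<rparr>)"
    have tcom: "\<And>f w. f \<in> mod_end R M \<Longrightarrow> w \<in> carrier M \<Longrightarrow> t (f w) = f (t w)"
      using t compose_app[of "carrier M" t _ _ t] by simp
    have bh: "(\<lambda>z\<in>carrier M. b (pr j z)) \<in> mod_end R M" using ext_me[OF j b] .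
    show "compose (A j) (restrict t (A j)) b = compose (A j) b (restrict t (A j))"
    proof (rule ext)
      fix w show "compose (A j) (restrict t (A j)) b w = compose (A j) b (restrict t (A j)) w"
      proof (cases "w \<in> A j")
        case True
        have "t ((\<lambda>z\<in>carrier M. b (pr j z)) w) = (\<lambda>z\<in>carrier M. b (pr j z)) (t w)"
          using tcom[OF bh Ac[OF True]] .
        hence "t (b w) = b (t w)" using True Ac tA pr_id[OF j] by simp
        thus ?thesis using True sme_in[OF b] tA by (simp add: compose_def)
      next
        case False thus ?thesis by (simp add: compose_def)
      qed
    qed
  qed
  show "\<exists>x\<in>{z \<in> mod_end R (M\<lparr>carrier := A j\<rparr>). \<forall>b\<in>mod_end R (M\<lparr>carrier := A j\<rparr>). compose (A j) z b = compose (A j) b z}.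
      \<exists>y\<in>{z \<in> mod_end R (M\<lparr>carrier := A j\<rparr>). \<forall>b\<in>mod_end R (M\<lparr>carrier := A j\<rparr>). compose (A j) z b = compose (A j) b z}.
       x \<noteq> (\<lambda>x\<in>A j. \<zero>\<^bsub>M\<^esub>) \<and> y \<noteq> (\<lambda>x\<in>A j. \<zero>\<^bsub>M\<^esub>) \<and> compose (A j) a x = y"
  proof (rule bexI[of _ xi], rule bexI[of _ yi], intro conjI)
    show "xi \<in> {z \<in> mod_end R (M\<lparr>carrier := A j\<rparr>). \<forall>b\<in>mod_end R (M\<lparr>carrier := A j\<rparr>). compose (A j) z b = compose (A j) b z}"
      using xi cen[OF x xA] unfolding xi_def by simp
    show "yi \<in> {z \<in> mod_end R (M\<lparr>carrier := A j\<rparr>). \<forall>b\<in>mod_end R (M\<lparr>carrier := A j\<rparr>). compose (A j) z b = compose (A j) b z}"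
      using yi cen[OF y yA] unfolding yi_def by simp
    show "xi \<noteq> (\<lambda>x\<in>A j. \<zero>\<^bsub>M\<^esub>)" using sme_zero[OF xi] wA xw1 unfolding xi_def by auto
    show "yi \<noteq> (\<lambda>x\<in>A j. \<zero>\<^bsub>M\<^esub>)" using sme_zero[OF yi] wA yw1 unfolding yi_def by auto
    show "compose (A j) a xi = yi" unfolding xi_def yi_def compose_def
    proof (rule restrict_ext)
      fix w assume w: "w \<in> A j"
      have "y w = a (pr j (x w))" using yw[OF Ac[OF w]] me_closed[OF xme Ac[OF w]] unfolding ah_def by simp
      also have "\<dots> = a (x w)" using pr_id[OF j xA[OF w]] by simp
      finally show "a (restrict x (A j) w) = y w" using w by simp
    qed
  qed
qed

end


context dd begin

lemma bwd: assumes H: "\<forall>j\<in>I. fully_invariant R M (A j) \<and> centrally_essential (End_ring R (M\<lparr>carrier := A j\<rparr>))"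
  shows "centrally_essential (End_ring R M)"
  unfolding CE_unfold
proof (intro ballI impI)
  fix a assume a: "a \<in> mod_end R M" and a0: "a \<noteq> (\<lambda>x\<in>carrier M. \<zero>\<^bsub>M\<^esub>)"
  have fA: "\<And>f i x. f \<in> mod_end R M \<Longrightarrow> i \<in> I \<Longrightarrow> x \<in> A i \<Longrightarrow> f x \<in> A i"
    using H unfolding fully_invariant_def by blast
  obtain z where z: "z \<in> carrier M" "a z \<noteq> \<zero>\<^bsub>M\<^esub>" using a0 zero_fun[OF a] by blast
  obtain j w where j: "j \<in> I" and w: "w \<in> A j" "a w \<noteq> \<zero>\<^bsub>M\<^esub>" using nonzero_A[OF a z] by blast
  have Ac: "\<And>w. w \<in> A j \<Longrightarrow> w \<in> carrier M" using subc[OF j] by blast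
  define ai where "ai = restrict a (A j)"
  have ai: "ai \<in> mod_end R (M\<lparr>carrier := A j\<rparr>)" unfolding ai_def
    using restr_me[OF sub[OF j] a] fA[OF a j] by blast
  have ai0: "ai \<noteq> (\<lambda>x\<in>A j. \<zero>\<^bsub>M\<^esub>)" using sme_zero[OF ai] w unfolding ai_def by auto
  have ceJ: "centrally_essential (End_ring R (M\<lparr>carrier := A j\<rparr>))" using H j by blast
  have "\<exists>x\<in>{z \<in> mod_end R (M\<lparr>carrier := A j\<rparr>). \<forall>b\<in>mod_end R (M\<lparr>carrier := A j\<rparr>). compose (A j) z b = compose (A j) b z}.
      \<exists>y\<in>{z \<in> mod_end R (M\<lparr>carrier := A j\<rparr>). \<forall>b\<in>mod_end R (M\<lparr>carrier := A j\<rparr>). compose (A j) z b = compose (A j) b z}.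
       x \<noteq> (\<lambda>x\<in>A j. \<zero>\<^bsub>M\<^esub>) \<and> y \<noteq> (\<lambda>x\<in>A j. \<zero>\<^bsub>M\<^esub>) \<and> compose (A j) ai x = y"
    using bspec[OF ceJ[unfolded CE_sub] ai] ai0 by (rule mp)
  then obtain xi yi where
    xi: "xi \<in> {z \<in> mod_end R (M\<lparr>carrier := A j\<rparr>). \<forall>b\<in>mod_end R (M\<lparr>carrier := A j\<rparr>). compose (A j) z b = compose (A j) b z}"
    and yi: "yi \<in> {z \<in> mod_end R (M\<lparr>carrier := A j\<rparr>). \<forall>b\<in>mod_end R (M\<lparr>carrier := A j\<rparr>). compose (A j) z b = compose (A j) b z}"
    and xi0: "xi \<noteq> (\<lambda>x\<in>A j. \<zero>\<^bsub>M\<^esub>)" and yi0: "yi \<noteq> (\<lambda>x\<in>A j. \<zero>\<^bsub>M\<^esub>)"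
    and axy: "compose (A j) ai xi = yi" by (elim bexE conjE) simp
  have xime: "xi \<in> mod_end R (M\<lparr>carrier := A j\<rparr>)" and yime: "yi \<in> mod_end R (M\<lparr>carrier := A j\<rparr>)"
    using xi yi by simp_all
  have cen: "\<And>t. t \<in> {z \<in> mod_end R (M\<lparr>carrier := A j\<rparr>). \<forall>b\<in>mod_end R (M\<lparr>carrier := A j\<rparr>). compose (A j) z b = compose (A j) b z}
     \<Longrightarrow> (\<lambda>z\<in>carrier M. t (pr j z)) \<in> ctr R M"
  proof -
    fix t assume t: "t \<in> {z \<in> mod_end R (M\<lparr>carrier := A j\<rparr>). \<forall>b\<in>mod_end R (M\<lparr>carrier := A j\<rparr>). compose (A j) z b = compose (A j) b z}"
    have tme: "t \<in> mod_end R (M\<lparr>carrier := A j\<rparr>)" using t by simp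
    have tcom: "\<And>b u. b \<in> mod_end R (M\<lparr>carrier := A j\<rparr>) \<Longrightarrow> u \<in> A j \<Longrightarrow> t (b u) = b (t u)"
      using t compose_app[of "A j" t _ _ t] by simp
    have "\<forall>f\<in>mod_end R M. compose (carrier M) (\<lambda>z\<in>carrier M. t (pr j z)) f = compose (carrier M) f (\<lambda>z\<in>carrier M. t (pr j z))"
    proof
      fix f assume f: "f \<in> mod_end R M"
      have fi: "restrict f (A j) \<in> mod_end R (M\<lparr>carrier := A j\<rparr>)" using restr_me[OF sub[OF j] f] fA[OF f j] by blast
      show "compose (carrier M) (\<lambda>z\<in>carrier M. t (pr j z)) f = compose (carrier M) f (\<lambda>z\<in>carrier M. t (pr j z))"
        unfolding compose_def
      proof (rule restrict_ext)
        fix v assume v: "v \<in> carrier M"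
        have fv: "f v \<in> carrier M" using me_closed[OF f v] .
        have "(\<lambda>z\<in>carrier M. t (pr j z)) (f v) = t (pr j (f v))" using fv by simp
        also have "\<dots> = t (f (pr j v))" using pr_comm[OF f fA[OF f] j v] by simp
        also have "\<dots> = t (restrict f (A j) (pr j v))" using pr_A[OF j v] by simp
        also have "\<dots> = restrict f (A j) (t (pr j v))" using tcom[OF fi pr_A[OF j v]] .
        also have "\<dots> = f (t (pr j v))" using sme_in[OF tme pr_A[OF j v]] by simp
        also have "\<dots> = f ((\<lambda>z\<in>carrier M. t (pr j z)) v)" using v by simp
        finally show "(\<lambda>z\<in>carrier M. t (pr j z)) (f v) = f ((\<lambda>z\<in>carrier M. t (pr j z)) v)" .
      qed
    qed
    thus "(\<lambda>z\<in>carrier M. t (pr j z)) \<in> ctr R M" using ext_me[OF j tme] by simp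
  qed
  have nz: "\<And>t. t \<in> mod_end R (M\<lparr>carrier := A j\<rparr>) \<Longrightarrow> t \<noteq> (\<lambda>x\<in>A j. \<zero>\<^bsub>M\<^esub>) \<Longrightarrow>
      (\<lambda>z\<in>carrier M. t (pr j z)) \<noteq> (\<lambda>x\<in>carrier M. \<zero>\<^bsub>M\<^esub>)"
  proof -
    fix t assume tme: "t \<in> mod_end R (M\<lparr>carrier := A j\<rparr>)" and t0: "t \<noteq> (\<lambda>x\<in>A j. \<zero>\<^bsub>M\<^esub>)"
    obtain u where u: "u \<in> A j" "t u \<noteq> \<zero>\<^bsub>M\<^esub>" using t0 sme_zero[OF tme] by blast
    have "(\<lambda>z\<in>carrier M. t (pr j z)) u \<noteq> \<zero>\<^bsub>M\<^esub>" using u Ac pr_id[OF j] by simp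
    moreover have "u \<in> carrier M" using u Ac by blast
    ultimately show "(\<lambda>z\<in>carrier M. t (pr j z)) \<noteq> (\<lambda>x\<in>carrier M. \<zero>\<^bsub>M\<^esub>)" by (metis restrict_apply')
  qed
  have aiy: "\<And>u. u \<in> A j \<Longrightarrow> ai (xi u) = yi u"
    using axy by (auto simp: compose_def fun_eq_iff split: if_splits)
  show "\<exists>x\<in>ctr R M. \<exists>y\<in>ctr R M. x \<noteq> (\<lambda>x\<in>carrier M. \<zero>\<^bsub>M\<^esub>) \<and> y \<noteq> (\<lambda>x\<in>carrier M. \<zero>\<^bsub>M\<^esub>)
        \<and> compose (carrier M) a x = y"
  proof (rule bexI[of _ "\<lambda>z\<in>carrier M. xi (pr j z)"], rule bexI[of _ "\<lambda>z\<in>carrier M. yi (pr j z)"], intro conjI)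
    show "(\<lambda>z\<in>carrier M. xi (pr j z)) \<in> ctr R M" using cen[OF xi] .
    show "(\<lambda>z\<in>carrier M. yi (pr j z)) \<in> ctr R M" using cen[OF yi] .
    show "(\<lambda>z\<in>carrier M. xi (pr j z)) \<noteq> (\<lambda>x\<in>carrier M. \<zero>\<^bsub>M\<^esub>)" using nz[OF xime xi0] .
    show "(\<lambda>z\<in>carrier M. yi (pr j z)) \<noteq> (\<lambda>x\<in>carrier M. \<zero>\<^bsub>M\<^esub>)" using nz[OF yime yi0] .
    show "compose (carrier M) a (\<lambda>z\<in>carrier M. xi (pr j z)) = (\<lambda>z\<in>carrier M. yi (pr j z))"
      unfolding compose_def
    proof (rule restrict_ext)
      fix v assume v: "v \<in> carrier M"
      have "a (xi (pr j v)) = ai (xi (pr j v))" unfolding ai_def using sme_in[OF xime pr_A[OF j v]] by simp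
      also have "\<dots> = yi (pr j v)" using aiy[OF pr_A[OF j v]] .
      finally show "a ((\<lambda>z\<in>carrier M. xi (pr j z)) v) = yi (pr j v)" using v by simp
    qed
  qed
qed

end

theorem lemma2p1:
  fixes R :: "('a, 'c) ring_scheme" and M :: "('a, 'b, 'd) module_scheme"
    and I :: "'i set" and A :: "'i \<Rightarrow> 'b set"
  assumes "left_module R M"
    and "direct_decomposition R M I A"
  shows "centrally_essential (End_ring R M) \<longleftrightarrow>
    (\<forall>i\<in>I. fully_invariant R M (A i)
       \<and> centrally_essential (End_ring R (M\<lparr>carrier := A i\<rparr>)))"
proof -
  interpret D: dd R M I A by (rule dd.intro[OF assms(1)]) (simp add: dd_axioms_def assms(2))
  show ?thesis using D.fwd_FI D.fwd_CE D.bwd by blast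
qed


end
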